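(* Let $(K,v)$ be an extremal valued field with nontrivial valuation, divisible value group $\Gamma$, valuation ring $\mathcal{O}_v$, maximal ideal $\mathfrak{m}_v$, and residue field $k$ which is not algebraically closed. Then there is no polynomial $f(Y,Z)\in\mathcal{O}_v[Y,Z]$ such that both (i) there are $\alpha_1,\dots,\alpha_m\in k$ such that for every $\alpha\in k\setminus\{\alpha_1,\dots,\alpha_m\}$ the equation $\bar f(\alpha,z)=0$ has no solution $z\in k$ (where $\bar f\in k[Y,Z]$ is the reduction of $f$ modulo $\mathfrak{m}_v$), and (ii) for every $\epsilon\in\mathfrak{m}_v$ the equation $f(\epsilon,Z)=0$ has a solution in $\mathcal{O}_v$.
   Context: $(K,v)$ with valuation ring $\mathcal{O}_v$ and value group $\Gamma$ (and $v(0)=\infty$) is extremal if for every $n\ge1$ and every $F\in K[X_1,\dots,X_n]$ the set $\{v(F(a_1,\dots,a_n)) : a_i\in\mathcal{O}_v\}\subseteq\Gamma\cup\{\infty\}$ has a maximal element. *)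

theory Defs
  imports "HOL-Computational_Algebra.Polynomial"
begin

text \<open>A (Krull) valuation on a field, given on nonzero elements; the value at 0
  is junk and is treated as infinity by all definitions below.\<close>
definition valuation :: "('a::field \<Rightarrow> 'g::linordered_ab_group_add) \<Rightarrow> bool" where
  "valuation v \<longleftrightarrow>
     (\<forall>x y. x \<noteq> 0 \<longrightarrow> y \<noteq> 0 \<longrightarrow> v (x * y) = v x + v y) \<and>
     (\<forall>x y. x \<noteq> 0 \<longrightarrow> y \<noteq> 0 \<longrightarrow> x + y \<noteq> 0 \<longrightarrow> min (v x) (v y) \<le> v (x + y))"

definition val_ring :: "('a::field \<Rightarrow> 'g::linordered_ab_group_add) \<Rightarrow> 'a set" where
  "val_ring v = {x. x = 0 \<or> 0 \<le> v x}"

definition max_ideal :: "('a::field \<Rightarrow> 'g::linordered_ab_group_add) \<Rightarrow> 'a set" where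
  "max_ideal v = {x. x = 0 \<or> 0 < v x}"

definition value_group :: "('a::field \<Rightarrow> 'g::linordered_ab_group_add) \<Rightarrow> 'g set" where
  "value_group v = v ` (UNIV - {0})"

definition nontrivial_val :: "('a::field \<Rightarrow> 'g::linordered_ab_group_add) \<Rightarrow> bool" where
  "nontrivial_val v \<longleftrightarrow> (\<exists>x. x \<noteq> 0 \<and> v x \<noteq> 0)"

definition divisible_group :: "'g::linordered_ab_group_add set \<Rightarrow> bool" where
  "divisible_group G \<longleftrightarrow> (\<forall>g\<in>G. \<forall>n::nat. n \<ge> 1 \<longrightarrow> (\<exists>h\<in>G. (\<Sum>_<n. h) = g))"

inductive_set polyfun :: "nat \<Rightarrow> ((nat \<Rightarrow> 'a::comm_ring_1) \<Rightarrow> 'a) set" for n :: nat where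
  const: "(\<lambda>_. c) \<in> polyfun n"
| var: "i < n \<Longrightarrow> (\<lambda>a. a i) \<in> polyfun n"
| add: "F \<in> polyfun n \<Longrightarrow> G \<in> polyfun n \<Longrightarrow> (\<lambda>a. F a + G a) \<in> polyfun n"
| mult: "F \<in> polyfun n \<Longrightarrow> G \<in> polyfun n \<Longrightarrow> (\<lambda>a. F a * G a) \<in> polyfun n"

text \<open>Extremality: for every polynomial F in n \<ge> 1 variables, the set
  of values v(F(a)) for a in O^n, inside Gamma with infinity, has a maximum. The maximum is
  infinity iff F has a zero in O^n.\<close>
definition extremal :: "('a::field \<Rightarrow> 'g::linordered_ab_group_add) \<Rightarrow> bool" where
  "extremal v \<longleftrightarrow>
     (\<forall>n::nat. n \<ge> 1 \<longrightarrow> (\<forall>F \<in> polyfun n.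
        (\<exists>a. (\<forall>i<n. a i \<in> val_ring v) \<and> F a = 0) \<or>
        (\<exists>a. (\<forall>i<n. a i \<in> val_ring v) \<and> F a \<noteq> 0 \<and>
             (\<forall>b. (\<forall>i<n. b i \<in> val_ring v) \<longrightarrow> F b \<noteq> 0 \<longrightarrow> v (F b) \<le> v (F a)))))"

text \<open>res is the residue map O \<rightarrow> k: a surjective ring homomorphism with kernel m,
  so k is (isomorphic to) O/m.\<close>
definition residue_map :: "('a::field \<Rightarrow> 'g::linordered_ab_group_add) \<Rightarrow> ('a \<Rightarrow> 'k::field) \<Rightarrow> bool" where
  "residue_map v res \<longleftrightarrow>
     (\<forall>x\<in>val_ring v. \<forall>y\<in>val_ring v. res (x + y) = res x + res y \<and> res (x * y) = res x * res y) \<and>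
     res 1 = 1 \<and> res ` val_ring v = UNIV \<and>
     (\<forall>x\<in>val_ring v. res x = 0 \<longleftrightarrow> x \<in> max_ideal v)"

definition alg_closed_field :: "'k::field itself \<Rightarrow> bool" where
  "alg_closed_field _ \<longleftrightarrow> (\<forall>p::'k poly. degree p \<ge> 1 \<longrightarrow> (\<exists>x. poly p x = 0))"

definition eval2 :: "(nat \<Rightarrow> nat \<Rightarrow> 'a::comm_ring_1) \<Rightarrow> nat \<Rightarrow> 'a \<Rightarrow> 'a \<Rightarrow> 'a" where
  "eval2 c N y z = (\<Sum>i\<le>N. \<Sum>j\<le>N. c i j * y ^ i * z ^ j)"

end

theory Submission
  imports Defs
begin


definition nsm :: "nat \<Rightarrow> 'g::ab_group_add \<Rightarrow> 'g" where
  "nsm n g = (\<Sum>_<n. g)"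

lemma nsm_0[simp]: "nsm 0 g = 0" by (simp add: nsm_def)
lemma nsm_Suc[simp]: "nsm (Suc n) g = g + nsm n g" by (simp add: nsm_def add.commute)
lemma nsm_add: "nsm (m + n) g = nsm m g + nsm n g" by (induct m) (simp_all add: add.assoc)
lemma nsm_mult: "nsm (m * n) g = nsm m (nsm n g)" by (induct m) (simp_all add: nsm_add)
lemma nsm_zero[simp]: "nsm n 0 = 0" by (induct n) simp_all
lemma nsm_mono: "(a::'g::ordered_ab_group_add) \<le> b \<Longrightarrow> nsm n a \<le> nsm n b"
  by (induct n) (simp_all add: add_mono)
lemma nsm_strict: "(a::'g::ordered_ab_group_add) < b \<Longrightarrow> n > 0 \<Longrightarrow> nsm n a < nsm n b"
proof (induct n)
  case (Suc n) then show ?case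
    by (cases n) (auto intro: add_less_le_mono nsm_mono)
qed simp
lemma nsm_le_iff: "n > 0 \<Longrightarrow> nsm n (a::'g::linordered_ab_group_add) \<le> nsm n b \<longleftrightarrow> a \<le> b"
  by (meson nsm_mono nsm_strict not_le)
lemma nsm_less_iff: "n > 0 \<Longrightarrow> nsm n (a::'g::linordered_ab_group_add) < nsm n b \<longleftrightarrow> a < b"
  by (meson nsm_mono nsm_strict not_le)
lemma nsm_pos: "0 < (a::'g::linordered_ab_group_add) \<Longrightarrow> n > 0 \<Longrightarrow> 0 < nsm n a"
  using nsm_strict[of 0 a n] by simp
lemma nsm_nonneg: "0 \<le> (a::'g::linordered_ab_group_add) \<Longrightarrow> 0 \<le> nsm n a"
  using nsm_mono[of 0 a n] by simp
lemma nsm_less_n: "0 < (a::'g::linordered_ab_group_add) \<Longrightarrow> n1 < n2 \<Longrightarrow> nsm n1 a < nsm n2 a"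
proof -
  assume a: "0 < a" "n1 < n2"
  then obtain d where "n2 = n1 + d" "d > 0" by (metis less_imp_add_positive)
  then show ?thesis using nsm_pos[OF a(1), of d] by (simp add: nsm_add)
qed

locale vfield =
  fixes v :: "'a::field \<Rightarrow> 'g::linordered_ab_group_add" and res :: "'a \<Rightarrow> 'k::field"
  assumes val: "valuation v" and resm: "residue_map v res"
begin

abbreviation "Ov \<equiv> val_ring v"
abbreviation "Mv \<equiv> max_ideal v"

lemma vmult: "x \<noteq> 0 \<Longrightarrow> y \<noteq> 0 \<Longrightarrow> v (x*y) = v x + v y"
  using val unfolding valuation_def by blast
lemma vadd: "x \<noteq> 0 \<Longrightarrow> y \<noteq> 0 \<Longrightarrow> x + y \<noteq> 0 \<Longrightarrow> min (v x) (v y) \<le> v (x+y)"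
  using val unfolding valuation_def by blast
lemma v1[simp]: "v 1 = 0" using vmult[of 1 1] by simp
lemma vinv: "x \<noteq> 0 \<Longrightarrow> v (inverse x) = - v x"
  using vmult[of x "inverse x"] by (simp add: eq_neg_iff_add_eq_0 add.commute)
lemma vdiv: "x \<noteq> 0 \<Longrightarrow> y \<noteq> 0 \<Longrightarrow> v (x / y) = v x - v y"
  by (simp add: divide_inverse vmult vinv)
lemma vm1[simp]: "v (-1) = 0"
proof -
  have "v (-1) + v (-1) = 0" using vmult[of "-1" "-1"] by simp
  then show ?thesis by (metis add_neg_neg add_pos_pos less_irrefl linorder_neqE)
qed
lemma vneg[simp]: "v (-x) = v x"
proof (cases "x = 0")
  case False then show ?thesis using vmult[of "-1" x] by simp
qed simp
lemma vpow: "x \<noteq> 0 \<Longrightarrow> v (x^n) = nsm n (v x)"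
  by (induct n) (simp_all add: vmult)

lemma O_iff: "x \<in> Ov \<longleftrightarrow> x = 0 \<or> 0 \<le> v x" unfolding val_ring_def by simp
lemma M_iff: "x \<in> Mv \<longleftrightarrow> x = 0 \<or> 0 < v x" unfolding max_ideal_def by simp
lemma O0[simp]: "0 \<in> Ov" and O1[simp]: "1 \<in> Ov" and M0[simp]: "0 \<in> Mv"
  by (simp_all add: O_iff M_iff)
lemma O_add: "x \<in> Ov \<Longrightarrow> y \<in> Ov \<Longrightarrow> x + y \<in> Ov"
  unfolding O_iff by (metis add_0 add_0_right min.bounded_iff order.trans vadd)
lemma M_add: "x \<in> Mv \<Longrightarrow> y \<in> Mv \<Longrightarrow> x + y \<in> Mv"
  unfolding M_iff by (metis add_0 add_0_right min_less_iff_conj order.strict_trans2 vadd)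
lemma O_mult: "x \<in> Ov \<Longrightarrow> y \<in> Ov \<Longrightarrow> x * y \<in> Ov"
  unfolding O_iff by (cases "x = 0"; cases "y = 0") (auto simp: vmult)
lemma M_mult: "x \<in> Ov \<Longrightarrow> y \<in> Mv \<Longrightarrow> x * y \<in> Mv"
  unfolding O_iff M_iff by (cases "x = 0"; cases "y = 0") (auto simp: vmult add_nonneg_pos)
lemma O_neg: "x \<in> Ov \<Longrightarrow> -x \<in> Ov" unfolding O_iff by auto
lemma O_diff: "x \<in> Ov \<Longrightarrow> y \<in> Ov \<Longrightarrow> x - y \<in> Ov"
  using O_add O_neg by (metis diff_conv_add_uminus)
lemma M_O: "x \<in> Mv \<Longrightarrow> x \<in> Ov" unfolding O_iff M_iff by auto
lemma O_pow: "x \<in> Ov \<Longrightarrow> x ^ n \<in> Ov" by (induct n) (simp_all add: O_mult)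
lemma M_pow: "x \<in> Mv \<Longrightarrow> n > 0 \<Longrightarrow> x ^ n \<in> Mv"
  by (cases n) (simp_all add: M_mult O_pow M_O mult.commute[of x])
lemma O_sum: "(\<And>i. i \<in> S \<Longrightarrow> f i \<in> Ov) \<Longrightarrow> sum f S \<in> Ov"
  by (induct S rule: infinite_finite_induct) (simp_all add: O_add)
lemma M_sum: "(\<And>i. i \<in> S \<Longrightarrow> f i \<in> Mv) \<Longrightarrow> sum f S \<in> Mv"
  by (induct S rule: infinite_finite_induct) (simp_all add: M_add)

lemma res_add: "x \<in> Ov \<Longrightarrow> y \<in> Ov \<Longrightarrow> res (x + y) = res x + res y"
  using resm unfolding residue_map_def by blast
lemma res_mult: "x \<in> Ov \<Longrightarrow> y \<in> Ov \<Longrightarrow> res (x * y) = res x * res y"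
  using resm unfolding residue_map_def by blast
lemma res1[simp]: "res 1 = 1" using resm unfolding residue_map_def by blast
lemma res_zero_iff: "x \<in> Ov \<Longrightarrow> res x = 0 \<longleftrightarrow> x \<in> Mv"
  using resm unfolding residue_map_def by blast
lemma res0[simp]: "res 0 = 0" using res_zero_iff[of 0] by simp
lemma res_surj: "\<exists>x\<in>Ov. res x = t"
  using resm unfolding residue_map_def by (metis imageE UNIV_I)
lemma res_neg: "x \<in> Ov \<Longrightarrow> res (-x) = - res x"
  using res_add[of x "-x"] O_neg[of x] by (simp add: eq_neg_iff_add_eq_0 add.commute)
lemma res_m1[simp]: "res (-1) = -1" using res_neg[of 1] by simp
lemma res_diff: "x \<in> Ov \<Longrightarrow> y \<in> Ov \<Longrightarrow> res (x - y) = res x - res y"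
  using res_add[of x "-y"] res_neg[of y] O_neg[of y] by simp
lemma res_pow: "x \<in> Ov \<Longrightarrow> res (x ^ n) = res x ^ n"
  by (induct n) (simp_all add: res_mult O_pow)
lemma res_sum: "(\<And>i. i \<in> S \<Longrightarrow> f i \<in> Ov) \<Longrightarrow> res (sum f S) = (\<Sum>i\<in>S. res (f i))"
proof (induct S rule: infinite_finite_induct)
  case (insert x F) then show ?case by (simp add: res_add O_sum)
qed simp_all
lemma unit_of_res: "x \<in> Ov \<Longrightarrow> res x \<noteq> 0 \<Longrightarrow> x \<noteq> 0 \<and> v x = 0"
  using res_zero_iff[of x] unfolding O_iff M_iff by auto
lemma res_of_unit: "x \<noteq> 0 \<Longrightarrow> v x = 0 \<Longrightarrow> x \<in> Ov \<and> res x \<noteq> 0"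
  using res_zero_iff[of x] unfolding O_iff M_iff by auto
lemma res_div: "x \<in> Ov \<Longrightarrow> y \<noteq> 0 \<Longrightarrow> v y = 0 \<Longrightarrow> x / y \<in> Ov \<and> res (x / y) = res x / res y"
proof -
  assume x: "x \<in> Ov" and y: "y \<noteq> 0" "v y = 0"
  have q: "x / y \<in> Ov"
    using x y by (cases "x = 0") (auto simp: O_iff vdiv)
  have yO: "y \<in> Ov" "res y \<noteq> 0" using res_of_unit y by auto
  have "res (x / y) * res y = res x" using res_mult[OF q yO(1)] y by simp
  then show ?thesis using q yO by (simp add: field_simps)
qed

lemma eval2_O: "(\<And>i j. c i j \<in> Ov) \<Longrightarrow> y \<in> Ov \<Longrightarrow> z \<in> Ov \<Longrightarrow> eval2 c N y z \<in> Ov"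
  unfolding eval2_def by (intro O_sum O_mult O_pow) auto

lemma res_eval2: "(\<And>i j. c i j \<in> Ov) \<Longrightarrow> y \<in> Ov \<Longrightarrow> z \<in> Ov \<Longrightarrow>
   res (eval2 c N y z) = eval2 (\<lambda>i j. res (c i j)) N (res y) (res z)"
  unfolding eval2_def
  by (simp add: res_sum O_sum O_mult O_pow res_mult res_pow)

end


definition hf :: "(nat \<Rightarrow> 'a::field) \<Rightarrow> nat \<Rightarrow> 'a \<Rightarrow> 'a \<Rightarrow> 'a" where
  "hf g D a b = (\<Sum>i\<le>D. g i * a^(D-i) * b^i)"
definition gp :: "(nat \<Rightarrow> 'a::field) \<Rightarrow> nat \<Rightarrow> 'a \<Rightarrow> 'a" where
  "gp g D x = (\<Sum>i\<le>D. g i * x^i)"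

lemma hf_L1: "(a::'a::field) \<noteq> 0 \<Longrightarrow> hf g D a b = a^D * gp g D (b/a)"
  unfolding hf_def gp_def sum_distrib_left
proof (rule sum.cong)
  fix i assume a: "a \<noteq> 0" and i: "i \<in> {..D}"
  then have "a^D = a^(D-i) * a^i" by (simp add: power_add[symmetric])
  then show "g i * a ^ (D - i) * b ^ i = a ^ D * (g i * (b / a) ^ i)"
    using a by (simp add: power_divide field_simps)
qed simp

lemma hf_L2: "(b::'a::field) \<noteq> 0 \<Longrightarrow> hf g D a b = b^D * (\<Sum>i\<le>D. g i * (a/b)^(D-i))"
  unfolding hf_def sum_distrib_left
proof (rule sum.cong)
  fix i assume b: "b \<noteq> 0" and i: "i \<in> {..D}"
  then have "b^D = b^(D-i) * b^i" by (simp add: power_add[symmetric])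
  then show "g i * a ^ (D - i) * b ^ i = b ^ D * (g i * (a / b) ^ (D-i))"
    using b by (simp add: power_divide field_simps)
qed simp

lemma hf_00: "D \<ge> 1 \<Longrightarrow> hf g D 0 0 = (0::'a::field)"
  unfolding hf_def by (rule sum.neutral) (auto simp: power_0_left)

lemma hf_0b: "g D = 1 \<Longrightarrow> hf g D 0 b = (b::'a::field)^D"
proof -
  assume gD: "g D = 1"
  have "hf g D 0 b = (\<Sum>i\<le>D. if i = D then b^D else 0)"
    unfolding hf_def by (rule sum.cong) (auto simp: gD power_0_left)
  then show ?thesis by simp
qed

lemma polyfun_pow: "F \<in> polyfun n \<Longrightarrow> (\<lambda>a. F a ^ k) \<in> polyfun n"
proof (induct k)
  case 0 then show ?case using polyfun.const[of 1 n] by simp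
next
  case (Suc k) then show ?case using polyfun.mult[of F n "\<lambda>a. F a ^ k"] by simp
qed

lemma polyfun_sum: "finite S \<Longrightarrow> (\<And>i. i \<in> S \<Longrightarrow> F i \<in> polyfun n) \<Longrightarrow> (\<lambda>a. \<Sum>i\<in>S. F i a) \<in> polyfun n"
proof (induct S rule: finite_induct)
  case empty then show ?case using polyfun.const[of 0 n] by simp
next
  case (insert x S) then show ?case using polyfun.add[of "F x" n "\<lambda>a. \<Sum>i\<in>S. F i a"] by simp
qed

lemma polyfun_hf: "A \<in> polyfun n \<Longrightarrow> B \<in> polyfun n \<Longrightarrow> (\<lambda>a. hf g D (A a) (B a)) \<in> polyfun n"
  unfolding hf_def
  by (intro polyfun_sum polyfun.mult polyfun_pow polyfun.const) auto

context vfield begin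

lemma O_hf: "(\<And>i. g i \<in> Ov) \<Longrightarrow> a \<in> Ov \<Longrightarrow> b \<in> Ov \<Longrightarrow> hf g D a b \<in> Ov"
  unfolding hf_def by (intro O_sum O_mult O_pow) auto

lemma O_gp: "(\<And>i. g i \<in> Ov) \<Longrightarrow> a \<in> Ov \<Longrightarrow> gp g D a \<in> Ov"
  unfolding gp_def by (intro O_sum O_mult O_pow) auto

end

locale vform = vfield v res
  for v :: "'a::field \<Rightarrow> 'g::linordered_ab_group_add" and res :: "'a \<Rightarrow> 'k::field" +
  fixes g :: "nat \<Rightarrow> 'a" and D :: nat
  assumes gO: "\<And>i. g i \<in> val_ring v" and gD: "g D = 1" and D1: "D \<ge> 1"
    and gunit: "\<And>x. x \<in> val_ring v \<Longrightarrow> gp g D x \<noteq> 0 \<and> v (gp g D x) = 0"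
begin

lemma L2unit: "x \<in> Mv \<Longrightarrow> (\<Sum>i\<le>D. g i * x^(D-i)) \<noteq> 0 \<and> v (\<Sum>i\<le>D. g i * x^(D-i)) = 0"
proof -
  assume x: "x \<in> Mv"
  have xO: "x \<in> Ov" using M_O x .
  have "res (\<Sum>i\<le>D. g i * x^(D-i)) = (\<Sum>i\<le>D. res (g i) * res x^(D-i))"
    using xO gO by (simp add: res_sum O_mult O_pow res_mult res_pow)
  also have "\<dots> = (\<Sum>i\<le>D. if i = D then 1 else 0)"
    using res_zero_iff[OF xO] x gD by (intro sum.cong) (auto simp: power_0_left)
  finally have "res (\<Sum>i\<le>D. g i * x^(D-i)) = 1" by simp
  then show ?thesis using unit_of_res[of "\<Sum>i\<le>D. g i * x^(D-i)"] xO gO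
    by (auto intro!: O_sum O_mult O_pow)
qed

lemma hf_bound_a: "a \<noteq> 0 \<Longrightarrow> hf g D a b \<noteq> 0 \<and> v (hf g D a b) \<le> nsm D (v a)"
proof (cases "b / a \<in> Ov")
  case True
  assume a: "a \<noteq> 0"
  have "hf g D a b = a^D * gp g D (b/a)" using hf_L1[OF a] .
  then show ?thesis using gunit[OF True] a by (simp add: vmult vpow)
next
  case False
  assume a: "a \<noteq> 0"
  then have b: "b \<noteq> 0" using False by auto
  have "\<not> 0 \<le> v b - v a" using False a b by (simp add: O_iff vdiv)
  then have lt: "v b < v a" by simp
  have "a / b \<in> Mv" using a b lt by (simp add: M_iff vdiv)
  note u = L2unit[OF this]
  have "hf g D a b = b^D * (\<Sum>i\<le>D. g i * (a/b)^(D-i))" using hf_L2[OF b] .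
  moreover have "nsm D (v b) \<le> nsm D (v a)" using lt by (simp add: nsm_mono)
  ultimately show ?thesis using u b by (simp add: vmult vpow)
qed

lemma hf_bound_b: "b \<noteq> 0 \<Longrightarrow> hf g D a b \<noteq> 0 \<and> v (hf g D a b) \<le> nsm D (v b)"
proof (cases "a / b \<in> Mv")
  case True
  assume b: "b \<noteq> 0"
  have "hf g D a b = b^D * (\<Sum>i\<le>D. g i * (a/b)^(D-i))" using hf_L2[OF b] .
  then show ?thesis using L2unit[OF True] b by (simp add: vmult vpow)
next
  case False
  assume b: "b \<noteq> 0"
  then have a: "a \<noteq> 0" using False by auto
  have "\<not> 0 < v a - v b" using False a b by (simp add: M_iff vdiv)
  then have le: "v a \<le> v b" by simp
  have bO: "b / a \<in> Ov" using a b le by (simp add: O_iff vdiv)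
  have "hf g D a b = a^D * gp g D (b/a)" using hf_L1[OF a] .
  moreover have "nsm D (v a) \<le> nsm D (v b)" using le by (simp add: nsm_mono)
  ultimately show ?thesis using gunit[OF bO] a by (simp add: vmult vpow)
qed

end


context vform begin

lemma core:
  fixes u :: "nat \<Rightarrow> 'a" and c :: "nat \<Rightarrow> nat \<Rightarrow> 'a" and N :: nat and s :: 'a
  assumes ext: "extremal v" and dv: "divisible_group (value_group v)"
    and s: "s \<noteq> 0" "0 < v s"
    and uO: "\<And>j. u j \<in> Ov"
    and cO: "\<And>i l. c i l \<in> Ov"
    and roots: "\<forall>\<epsilon>\<in>Mv. \<exists>z\<in>Ov. eval2 c N \<epsilon> z = 0"
    and good: "\<forall>\<beta>\<in>Ov. \<exists>j\<in>{1,2}. \<forall>z\<in>Ov. eval2 c N (u j / gp g D \<beta>) z \<noteq> 0 \<and> v (eval2 c N (u j / gp g D \<beta>) z) = 0"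
  shows False
proof -
  have sO: "s \<in> Ov" using s by (simp add: O_iff)
  define H where "H x = hf g D s x" for x
  define E where "E j x z = (\<Sum>i\<le>N. \<Sum>l\<le>N. c i l * u j ^ i * s^(D*i) * (H x)^(N-i) * z^l)" for j x z
  define Mx where "Mx = N*D + 1"
  define K where "K = D*(Mx*D)"
  define P where "P a = hf g D (hf g D (E 1 (a 0) (a 1)) (E 2 (a 0) (a 2))) ((a 0)^(Mx*D))"
    for a :: "nat \<Rightarrow> 'a"
  have Kpos: "K > 0" using D1 by (simp add: K_def Mx_def)
  have Hnz: "H x \<noteq> 0" for x using hf_bound_a[OF s(1)] by (simp add: H_def)
  have HO: "x \<in> Ov \<Longrightarrow> H x \<in> Ov" for x unfolding H_def using O_hf gO sO by blast
  have E_eq: "E j x z = H x ^ N * eval2 c N (u j * s^D / H x) z" for j x z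
    unfolding E_def eval2_def sum_distrib_left
  proof (intro sum.cong refl)
    fix i l assume i: "i \<in> {..N}"
    have "H x ^ N = H x ^ (N - i) * H x ^ i" using i by (simp add: power_add[symmetric])
    moreover have "(u j * s^D / H x)^i = u j^i * s^(D*i) / H x ^ i"
      by (simp add: power_divide power_mult_distrib power_mult)
    ultimately show "c i l * u j ^ i * s ^ (D * i) * H x ^ (N - i) * z ^ l =
      H x ^ N * (c i l * (u j * s ^ D / H x) ^ i * z ^ l)"
      using Hnz[of x] by (simp add: field_simps power_mult)
  qed
  have EO: "x \<in> Ov \<Longrightarrow> z \<in> Ov \<Longrightarrow> E j x z \<in> Ov" for j x z
    unfolding E_def using HO cO uO sO by (intro O_sum O_mult O_pow) auto
  have PO: "(\<forall>i<3. a i \<in> Ov) \<Longrightarrow> P a \<in> Ov" for a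
    unfolding P_def by (intro O_hf gO EO O_pow) auto
  have pH: "(\<lambda>a. H (a 0)) \<in> polyfun 3" unfolding H_def
    by (rule polyfun_hf[OF polyfun.const polyfun.var]) simp
  have pE: "(\<lambda>a. E j (a 0) (a j)) \<in> polyfun 3" if j: "j < 3" for j
    unfolding E_def
  proof (intro polyfun_sum finite_atMost)
    fix i l
    show "(\<lambda>a. c i l * u j ^ i * s ^ (D * i) * H (a 0) ^ (N - i) * a j ^ l) \<in> polyfun 3"
      by (rule polyfun.mult[OF polyfun.mult[OF polyfun.const polyfun_pow[OF pH]] polyfun_pow[OF polyfun.var[OF j]]])
  qed
  have Ppoly: "P \<in> polyfun 3"
  proof -
    have "(\<lambda>a. hf g D (hf g D (E 1 (a 0) (a 1)) (E 2 (a 0) (a 2))) ((a 0)^(Mx*D))) \<in> polyfun 3"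
      by (rule polyfun_hf[OF polyfun_hf[OF pE pE] polyfun_pow[OF polyfun.var]]) simp_all
    then show ?thesis unfolding P_def .
  qed
  have bound: "P a \<noteq> 0 \<and> v (P a) < nsm K (v s)" if a: "\<forall>i<3. a i \<in> Ov" for a
  proof (cases "a 0 \<noteq> 0 \<and> v (a 0) < v s")
    case True
    have x: "a 0 ^ (Mx*D) \<noteq> 0" using True by simp
    have "P a \<noteq> 0 \<and> v (P a) \<le> nsm D (v (a 0 ^ (Mx*D)))"
      unfolding P_def using hf_bound_b[OF x] .
    moreover have "nsm D (v (a 0 ^ (Mx*D))) = nsm K (v (a 0))"
      using True by (simp add: vpow K_def nsm_mult)
    moreover have "nsm K (v (a 0)) < nsm K (v s)" using True Kpos by (simp add: nsm_less_iff)
    ultimately show ?thesis by auto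
  next
    case False
    define x where "x = a 0"
    have xO: "x \<in> Ov" using a by (simp add: x_def)
    define \<beta> where "\<beta> = x / s"
    have bO: "\<beta> \<in> Ov" using False s xO by (cases "x = 0") (auto simp: \<beta>_def x_def O_iff vdiv)
    note gu = gunit[OF bO]
    have Hx: "H x = s^D * gp g D \<beta>" unfolding H_def \<beta>_def using hf_L1[OF s(1)] .
    have vH: "v (H x) = nsm D (v s)" using Hx gu s by (simp add: vmult vpow)
    obtain j where j: "j \<in> {1,2}" and gj: "\<forall>z\<in>Ov. eval2 c N (u j / gp g D \<beta>) z \<noteq> 0 \<and>
        v (eval2 c N (u j / gp g D \<beta>) z) = 0" using good bO by blast
    have Y: "u j * s^D / H x = u j / gp g D \<beta>" using Hx s gu by (simp add: field_simps)
    have zO: "a j \<in> Ov" using a j by auto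
    have F: "eval2 c N (u j / gp g D \<beta>) (a j) \<noteq> 0 \<and> v (eval2 c N (u j / gp g D \<beta>) (a j)) = 0"
      using gj zO by blast
    have "E j x (a j) = H x ^ N * eval2 c N (u j / gp g D \<beta>) (a j)" using E_eq Y by simp
    then have Ej: "E j x (a j) \<noteq> 0 \<and> v (E j x (a j)) = nsm (N*D) (v s)"
      using F Hnz[of x] vH by (simp add: vmult vpow nsm_mult[symmetric])
    have inner: "hf g D (E 1 x (a 1)) (E 2 x (a 2)) \<noteq> 0 \<and>
        v (hf g D (E 1 x (a 1)) (E 2 x (a 2))) \<le> nsm D (nsm (N*D) (v s))"
      using j
    proof
      assume "j = 1" then show ?thesis using hf_bound_a[of "E 1 x (a 1)" "E 2 x (a 2)"] Ej by simp
    next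
      assume "j \<in> {2}" then show ?thesis using hf_bound_b[of "E 2 x (a 2)" "E 1 x (a 1)"] Ej by simp
    qed
    have "P a \<noteq> 0 \<and> v (P a) \<le> nsm D (v (hf g D (E 1 x (a 1)) (E 2 x (a 2))))"
      unfolding P_def x_def[symmetric] using hf_bound_a inner by blast
    moreover have "nsm D (v (hf g D (E 1 x (a 1)) (E 2 x (a 2)))) \<le> nsm (D*(D*(N*D))) (v s)"
      using inner by (simp add: nsm_mult nsm_mono)
    moreover have "D*(D*(N*D)) < K"
    proof -
      have "K = D*(D*(N*D)) + D*D" by (simp add: K_def Mx_def algebra_simps)
      then show ?thesis using D1 by simp
    qed
    then have "nsm (D*(D*(N*D))) (v s) < nsm K (v s)" using nsm_less_n s by blast
    ultimately show ?thesis by auto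
  qed
  obtain a where aO: "\<forall>i<3. a i \<in> Ov" and Pa: "P a \<noteq> 0"
    and amax: "\<forall>b. (\<forall>i<3. b i \<in> Ov) \<longrightarrow> P b \<noteq> 0 \<longrightarrow> v (P b) \<le> v (P a)"
  proof -
    have n3: "(1::nat) \<le> 3" by simp
    note e = ext[unfolded extremal_def, rule_format, OF n3 Ppoly]
    show ?thesis using e bound that by blast
  qed
  define \<gamma> where "\<gamma> = v (P a)"
  have g0: "0 \<le> \<gamma>" using PO[OF aO] Pa by (simp add: \<gamma>_def O_iff)
  have glt: "\<gamma> < nsm K (v s)" using bound[OF aO] by (simp add: \<gamma>_def)
  have "v (P a * s^K) \<in> value_group v" using Pa s by (simp add: value_group_def)
  moreover have "v (P a * s^K) = \<gamma> + nsm K (v s)" using Pa s by (simp add: vmult vpow \<gamma>_def)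
  ultimately have "\<gamma> + nsm K (v s) \<in> value_group v" by simp
  moreover have "K + K \<ge> 1" using Kpos by simp
  ultimately obtain \<rho> where \<rho>: "\<rho> \<in> value_group v" "nsm (K + K) \<rho> = \<gamma> + nsm K (v s)"
    using dv unfolding divisible_group_def nsm_def by blast
  have \<rho>2: "nsm K \<rho> + nsm K \<rho> = \<gamma> + nsm K (v s)" using \<rho>(2) by (simp add: nsm_add)
  have r1: "\<gamma> < nsm K \<rho>"
  proof (rule ccontr)
    assume "\<not> ?thesis"
    then have "nsm K \<rho> + nsm K \<rho> \<le> \<gamma> + \<gamma>" by (simp add: add_mono)
    then have "\<gamma> + nsm K (v s) \<le> \<gamma> + \<gamma>" using \<rho>2 by simp
    then show False using glt by simp
  qed
  have r2: "\<rho> < v s"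
  proof (rule ccontr)
    assume "\<not> ?thesis"
    then have "nsm K (v s) \<le> nsm K \<rho>" by (simp add: nsm_mono)
    then have "nsm K (v s) + nsm K (v s) \<le> nsm K \<rho> + nsm K \<rho>" by (simp add: add_mono)
    then have "nsm K (v s) + nsm K (v s) \<le> \<gamma> + nsm K (v s)" using \<rho>2 by simp
    then show False using glt by simp
  qed
  have r0: "0 < \<rho>"
  proof (rule ccontr)
    assume "\<not> ?thesis"
    then have "\<rho> \<le> 0" by simp
    then have "nsm K \<rho> \<le> nsm K 0" by (rule nsm_mono)
    then show False using r1 g0 by simp
  qed
  obtain x0 where x0: "x0 \<noteq> 0" "v x0 = \<rho>" using \<rho>(1) unfolding value_group_def by auto
  have x0O: "x0 \<in> Ov" using x0 r0 by (simp add: O_iff)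
  have Ym: "u j * s^D / H x0 \<in> Mv" for j
  proof (cases "u j = 0")
    case False
    have "v (H x0) \<le> nsm D (v x0)" using hf_bound_b[OF x0(1)] by (simp add: H_def)
    moreover have "nsm D (v x0) < nsm D (v s)" using x0 r2 D1 by (simp add: nsm_less_iff)
    moreover have "0 \<le> v (u j)" using uO[of j] False by (simp add: O_iff)
    ultimately have "v (H x0) < v (u j) + nsm D (v s)"
      by (meson le_add_same_cancel2 order_le_less_trans order_less_le_trans)
    then show ?thesis using False s Hnz[of x0] by (simp add: M_iff vdiv vmult vpow)
  qed simp
  obtain z1 where z1: "z1 \<in> Ov" "eval2 c N (u 1 * s^D / H x0) z1 = 0" using roots Ym by blast
  obtain z2 where z2: "z2 \<in> Ov" "eval2 c N (u 2 * s^D / H x0) z2 = 0" using roots Ym by blast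
  define b where "b i = (if i = 0 then x0 else if i = 1 then z1 else z2)" for i :: nat
  have bO: "\<forall>i<3. b i \<in> Ov" using x0O z1 z2 by (simp add: b_def)
  have e1: "E 1 x0 z1 = 0" using E_eq z1 by simp
  have e2: "E 2 x0 z2 = 0" using E_eq z2 by simp
  have Pb: "P b = (x0^(Mx*D))^D"
    unfolding P_def b_def using e1 e2 by (simp add: hf_00[OF D1] hf_0b[of g D, OF gD])
  have "P b \<noteq> 0" using Pb x0 by simp
  moreover have "v (P b) = nsm K \<rho>" using Pb x0 by (simp add: vpow K_def nsm_mult)
  ultimately have "nsm K \<rho> \<le> \<gamma>" using amax bO \<gamma>_def by metis
  then show False using r1 by simp
qed

end


definition cfin :: "nat \<Rightarrow> nat \<Rightarrow> 'a::comm_ring_1" where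
  "cfin i l = (if i = 1 \<and> l = 1 then 1 else if i = 0 then -1 else 0)"

lemma eval2_cfin: "eval2 cfin 1 y z = y*z - z - (1::'a::comm_ring_1)"
  by (simp add: eval2_def cfin_def atMost_Suc)

context vfield begin

lemma mid:
  fixes u :: "nat \<Rightarrow> 'a" and c :: "nat \<Rightarrow> nat \<Rightarrow> 'a" and N :: nat and s :: 'a
    and pbar :: "'k poly"
  assumes ext: "extremal v" and dv: "divisible_group (value_group v)"
    and s: "s \<noteq> 0" "0 < v s"
    and pl: "lead_coeff pbar = 1" and pd: "degree pbar \<ge> 1" and pr: "\<And>t. poly pbar t \<noteq> 0"
    and uO: "\<And>j. u j \<in> Ov"
    and cO: "\<And>i l. c i l \<in> Ov"
    and roots: "\<forall>\<epsilon>\<in>Mv. \<exists>z\<in>Ov. eval2 c N \<epsilon> z = 0"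
    and goodr: "\<forall>\<beta>\<in>Ov. \<exists>j\<in>{1,2}. \<forall>\<zeta>. eval2 (\<lambda>i l. res (c i l)) N (res (u j) / poly pbar (res \<beta>)) \<zeta> \<noteq> 0"
  shows False
proof -
  define D where "D = degree pbar"
  define g where "g i = (if i = D then 1 else SOME x. x \<in> Ov \<and> res x = coeff pbar i)" for i
  have gi: "g i \<in> Ov \<and> res (g i) = coeff pbar i" for i
  proof (cases "i = D")
    case True then show ?thesis using pl by (simp add: g_def D_def)
  next
    case False
    have "\<exists>x. x \<in> Ov \<and> res x = coeff pbar i" using res_surj by blast
    from someI_ex[OF this] show ?thesis using False by (simp add: g_def)
  qed
  have resgp: "res (gp g D b) = poly pbar (res b)" if b: "b \<in> Ov" for b
  proof -
    have "res (gp g D b) = (\<Sum>i\<le>D. res (g i) * res b ^ i)"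
      unfolding gp_def using gi b by (simp add: res_sum O_mult O_pow res_mult res_pow)
    also have "\<dots> = poly pbar (res b)" using gi by (simp add: poly_altdef D_def)
    finally show ?thesis .
  qed
  have gunit: "gp g D b \<noteq> 0 \<and> v (gp g D b) = 0" if b: "b \<in> Ov" for b
  proof -
    have "gp g D b \<in> Ov" using O_gp gi b by blast
    moreover have "res (gp g D b) \<noteq> 0" using resgp[OF b] pr by simp
    ultimately show ?thesis using unit_of_res by blast
  qed
  have gD: "g D = 1" by (simp add: g_def)
  have D1: "D \<ge> 1" using pd by (simp add: D_def)
  have "vform v res g D"
    unfolding vform_def vform_axioms_def
    using vfield_axioms gi gunit gD D1 by blast
  then interpret vform v res g D .
  show False
  proof (rule core[OF ext dv s uO cO roots])
    show "\<forall>\<beta>\<in>Ov. \<exists>j\<in>{1,2}. \<forall>z\<in>Ov. eval2 c N (u j / gp g D \<beta>) z \<noteq> 0 \<and> v (eval2 c N (u j / gp g D \<beta>) z) = 0"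
    proof
      fix \<beta> assume b: "\<beta> \<in> Ov"
      obtain j where j: "j \<in> {1,2}" and gj: "\<forall>\<zeta>. eval2 (\<lambda>i l. res (c i l)) N (res (u j) / poly pbar (res \<beta>)) \<zeta> \<noteq> 0"
        using goodr b by blast
      have Y: "u j / gp g D \<beta> \<in> Ov \<and> res (u j / gp g D \<beta>) = res (u j) / poly pbar (res \<beta>)"
      proof -
        have gb: "gp g D \<beta> \<noteq> 0" "v (gp g D \<beta>) = 0" using gunit[OF b] by auto
        note rd = res_div[OF uO[of j] gb]
        show ?thesis using rd resgp[OF b] by simp
      qed
      have "\<forall>z\<in>Ov. eval2 c N (u j / gp g D \<beta>) z \<noteq> 0 \<and> v (eval2 c N (u j / gp g D \<beta>) z) = 0"
      proof
        fix z assume z: "z \<in> Ov"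
        have "res (eval2 c N (u j / gp g D \<beta>) z) \<noteq> 0"
        proof -
          have "res (eval2 c N (u j / gp g D \<beta>) z) = eval2 (\<lambda>i l. res (c i l)) N (res (u j / gp g D \<beta>)) (res z)"
            by (rule res_eval2[OF cO Y[THEN conjunct1] z])
          then have "res (eval2 c N (u j / gp g D \<beta>) z) = eval2 (\<lambda>i l. res (c i l)) N (res (u j) / poly pbar (res \<beta>)) (res z)"
            using Y by simp
          then show ?thesis using gj by simp
        qed
        then show "eval2 c N (u j / gp g D \<beta>) z \<noteq> 0 \<and> v (eval2 c N (u j / gp g D \<beta>) z) = 0"
          by (rule unit_of_res[OF eval2_O[OF cO Y[THEN conjunct1] z]])
      qed
      then show "\<exists>j\<in>{1,2}. \<forall>z\<in>Ov. eval2 c N (u j / gp g D \<beta>) z \<noteq> 0 \<and> v (eval2 c N (u j / gp g D \<beta>) z) = 0"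
        using j by blast
    qed
  qed
qed

end


theorem proposition3p7:
  fixes v :: "'a::field \<Rightarrow> 'g::linordered_ab_group_add"
    and res :: "'a \<Rightarrow> 'k::field"
  assumes "valuation v"
    and "extremal v"
    and "nontrivial_val v"
    and "divisible_group (value_group v)"
    and "residue_map v res"
    and "\<not> alg_closed_field TYPE('k)"
  shows "\<not> (\<exists>(c :: nat \<Rightarrow> nat \<Rightarrow> 'a) (N :: nat).
            (\<forall>i j. c i j \<in> val_ring v) \<and>
            (\<exists>A :: 'k set. finite A \<and>
               (\<forall>\<alpha>. \<alpha> \<notin> A \<longrightarrow> (\<forall>z. eval2 (\<lambda>i j. res (c i j)) N \<alpha> z \<noteq> 0))) \<and>
            (\<forall>\<epsilon> \<in> max_ideal v. \<exists>z \<in> val_ring v. eval2 c N \<epsilon> z = 0))"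
proof
  assume "\<exists>(c :: nat \<Rightarrow> nat \<Rightarrow> 'a) (N :: nat).
            (\<forall>i j. c i j \<in> val_ring v) \<and>
            (\<exists>A :: 'k set. finite A \<and>
               (\<forall>\<alpha>. \<alpha> \<notin> A \<longrightarrow> (\<forall>z. eval2 (\<lambda>i j. res (c i j)) N \<alpha> z \<noteq> 0))) \<and>
            (\<forall>\<epsilon> \<in> max_ideal v. \<exists>z \<in> val_ring v. eval2 c N \<epsilon> z = 0)"
  then obtain c N A where cO: "\<And>i j. c i j \<in> val_ring v" and fA: "finite A"
    and iA: "\<And>\<alpha> z. \<alpha> \<notin> A \<Longrightarrow> eval2 (\<lambda>i j. res (c i j)) N \<alpha> z \<noteq> 0"
    and roots: "\<forall>\<epsilon> \<in> max_ideal v. \<exists>z \<in> val_ring v. eval2 c N \<epsilon> z = 0"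
    by blast
  interpret vfield v res using assms(1,5) by (rule vfield.intro)
  obtain s where s: "s \<noteq> 0" "0 < v s"
  proof -
    obtain x where x: "x \<noteq> 0" "v x \<noteq> 0" using assms(3) unfolding nontrivial_val_def by blast
    show ?thesis
    proof (cases "0 < v x")
      case True then show ?thesis using that x by blast
    next
      case False
      then have "0 < v (inverse x)" using x by (simp add: vinv)
      moreover have "inverse x \<noteq> 0" using x by simp
      ultimately show ?thesis using that by blast
    qed
  qed
  show False
  proof (cases "finite (UNIV :: 'k set)")
    case True
    define Q :: "'k poly" where "Q = (\<Prod>t\<in>(UNIV::'k set). [:-t, 1:])"
    define pbar where "pbar = 1 + Q"
    have dQ: "degree Q = card (UNIV::'k set)"
      unfolding Q_def by (subst degree_prod_eq_sum_degree) auto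
    have cpos: "card (UNIV::'k set) \<ge> 1" using True by (simp add: Suc_le_eq card_gt_0_iff)
    have lQ: "lead_coeff Q = 1" unfolding Q_def by (simp add: lead_coeff_prod)
    have dp: "degree pbar = degree Q" unfolding pbar_def using dQ cpos by (intro degree_add_eq_right) simp
    have lp: "lead_coeff pbar = 1" using dp lQ dQ cpos by (simp add: pbar_def)
    have pp: "poly pbar t = 1" for t
    proof -
      have "poly Q t = 0" unfolding Q_def poly_prod using True
        by (intro prod_zero) auto
      then show ?thesis by (simp add: pbar_def)
    qed
    have rc: "(\<lambda>i l. res (cfin i l)) = cfin"
      by (auto simp: fun_eq_iff cfin_def)
    show False
    proof (rule mid[OF assms(2,4) s lp _ _ _ _ _, of "\<lambda>_. 1" cfin 1])
      show "degree pbar \<ge> 1" using dp dQ cpos by simp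
      show "poly pbar t \<noteq> 0" for t using pp by simp
      show "(\<lambda>_. 1) j \<in> Ov" for j :: nat by simp
      show "cfin i l \<in> Ov" for i l by (simp add: cfin_def O_neg)
      show "\<forall>\<epsilon>\<in>Mv. \<exists>z\<in>Ov. eval2 cfin 1 \<epsilon> z = 0"
      proof
        fix e assume e: "e \<in> Mv"
        have eO: "e - 1 \<in> Ov" using M_O[OF e] by (simp add: O_diff)
        have "res (e - 1) = -1" using res_diff[OF M_O[OF e] O1] res_zero_iff[OF M_O[OF e]] e by simp
        then have u: "e - 1 \<noteq> 0" "v (e - 1) = 0" using unit_of_res[OF eO] by auto
        have "1 / (e - 1) \<in> Ov" using res_div[OF O1 u] by simp
        moreover have "eval2 cfin 1 e (1 / (e - 1)) = 0" 
        proof -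
          have "e * (1 / (e - 1)) - 1 / (e - 1) - 1 = (e - 1) * (1 / (e - 1)) - 1"
            by (simp only: left_diff_distrib mult_1_left)
          also have "\<dots> = 0" using u(1) by (metis divide_self times_divide_eq_right mult_1_right diff_self)
          finally show ?thesis unfolding eval2_cfin .
        qed
        ultimately show "\<exists>z\<in>Ov. eval2 cfin 1 e z = 0" by blast
      qed
      show "\<forall>\<beta>\<in>Ov. \<exists>j::nat\<in>{1,2}. \<forall>\<zeta>. eval2 (\<lambda>i l. res (cfin i l)) 1 (res ((\<lambda>_. 1) j) / poly pbar (res \<beta>)) \<zeta> \<noteq> 0"
        unfolding rc eval2_cfin pp by auto
    qed
  next
    case False
    obtain p :: "'k poly" where p: "degree p \<ge> 1" "\<And>x. poly p x \<noteq> 0"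
      using assms(6) unfolding alg_closed_field_def by blast
    have p0: "p \<noteq> 0" using p by auto
    define pbar where "pbar = smult (inverse (lead_coeff p)) p"
    have lp: "lead_coeff pbar = 1" using p0 by (simp add: pbar_def lead_coeff_smult)
    have dp: "degree pbar \<ge> 1" using p0 p by (simp add: pbar_def)
    have pp: "poly pbar t \<noteq> 0" for t using p0 p by (simp add: pbar_def)
    define S where "S = (\<lambda>(a, b). a / b) ` (A \<times> A) \<union> {0}"
    have "finite S" using fA by (simp add: S_def)
    then obtain \<kappa> where \<kappa>: "\<kappa> \<notin> S" using ex_new_if_finite[OF False] by blast
    obtain w where w: "w \<in> Ov" "res w = \<kappa>" using res_surj by blast
    define u where "u j = (if j = 2 then w else 1)" for j :: nat
    show False
    proof (rule mid[OF assms(2,4) s lp dp pp _ cO roots])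
      show "u j \<in> Ov" for j using w by (simp add: u_def)
      show "\<forall>\<beta>\<in>Ov. \<exists>j\<in>{1,2}. \<forall>\<zeta>. eval2 (\<lambda>i l. res (c i l)) N (res (u j) / poly pbar (res \<beta>)) \<zeta> \<noteq> 0"
      proof
        fix \<beta> assume b: "\<beta> \<in> Ov"
        define t where "t = poly pbar (res \<beta>)"
        have t0: "t \<noteq> 0" using pp by (simp add: t_def)
        show "\<exists>j\<in>{1,2}. \<forall>\<zeta>. eval2 (\<lambda>i l. res (c i l)) N (res (u j) / poly pbar (res \<beta>)) \<zeta> \<noteq> 0"
        proof (cases "1 / t \<in> A")
          case False
          then show ?thesis using iA by (auto simp: u_def t_def)
        next
          case True
          have "\<kappa> / t \<notin> A"
          proof
            assume "\<kappa> / t \<in> A"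
            then have m: "(\<kappa> / t, 1 / t) \<in> A \<times> A" using True by simp
            have "\<kappa> = (\<lambda>(a, b). a / b) (\<kappa> / t, 1 / t)" using t0 by simp
            then have "\<kappa> \<in> (\<lambda>(a, b). a / b) ` (A \<times> A)" using m by (rule rev_image_eqI[rotated])
            then show False using \<kappa> by (simp add: S_def)
          qed
          then show ?thesis using iA w by (auto simp: u_def t_def)
        qed
      qed
    qed
  qed
qed


end
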